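(* Let $\Gamma\subset PGL_{2n+2}(\mathbb{C})$ be a group of type $\mathcal{L}$, and suppose the homogeneous coordinates $[z':z'']$ are such that there is $R>0$ with $V_R\subset\Omega(\Gamma)$ and $g(V_R)\cap V_R=\emptyset$ for every $g\in\Gamma\setminus\{1\}$. Then the set $\mathcal{R}=\{\|C_g^{-1}\|: g\in\Gamma\setminus\{1\}\}$ is bounded in $\mathbb{R}$ if and only if the closure $\bar F$ of the $F$-region contains $V_{R'}$ for some $R'>0$.
   Context: $z'=(z^0,\dots,z^n)$, $z''=(z^{n+1},\dots,z^{2n+1})$; $V_R=\{[z':z'']\in\mathbb{P}^{2n+1}:\|z'\|>R\|z''\|\}$; $\|\cdot\|$ is the Euclidean norm and the operator norm. Each $g\in\Gamma\setminus\{1\}$ has a representative $\begin{pmatrix}A_g&B_g\\C_g&D_g\end{pmatrix}\in SL_{2n+2}(\mathbb{C})$ with $(n+1)\times(n+1)$ blocks, and under the hypothesis $C_g$ is invertible (norms below do not depend on the choice of representative). Put $\bar\Delta_g=\{[z':z'']:\|z''\|\le\|C_gz'+D_gz''\|\}$, $\bar\Delta=\bigcap_{g\in\Gamma\setminus\{1\}}\bar\Delta_g$, and the $F$-region $F=\operatorname{Int}\bar\Delta$. Type $\mathcal{L}$: an $n$-plane is an $n$-dimensional projective linear subspace of $\mathbb{P}^{2n+1}$; with $\mathcal{G}\subset\mathbb{P}^N=\mathbb{P}(\Lambda^{n+1}\mathbb{C}^{2n+2})$ the Plücker-embedded Grassmannian, $\hat\ell$ the Plücker point of $\ell$ and $\hat\sigma$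 the induced action; the limit image of a sequence of distinct projective transformations whose representatives (normalized so the largest entry has absolute value $1$) converge to $T$ is $\mathbb{P}(\operatorname{Im}T)$; a sequence in discrete $\Gamma$ is normal if it is of distinct elements and both it and $(\hat\sigma_\nu)$ have convergent normalized representatives; limit $n$-planes are those $\ell$ with $\hat\ell$ in the limit image of some $(\hat\sigma_\nu)$, $(\sigma_\nu)$ normal; $\Omega(\Gamma)$ is the complement of their union; $\Gamma$ is of type $\mathcal{L}$ if discrete and $\Omega(\Gamma)$ contains a domain containing an $n$-plane. *)

theory Defs
  imports "HOL-Analysis.Analysis"
begin

text \<open>CARD('n) = n+1. Homogeneous coordinates of P^{2n+1} are indexed by
  the type 'n + 'n: Inl i are the coordinates z', Inr i the coordinates z''.
  Projective points / subsets of P^{2n+1} are represented by their cones in C^{2n+2}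
  (nonzero vectors, closed under nonzero complex scaling).  A subgroup of PGL_{2n+2}(C)
  is represented by its full preimage in GL_{2n+2}(C).\<close>

definition smat :: "complex \<Rightarrow> complex^'m^'k \<Rightarrow> complex^'m^'k" where
  "smat c M = (\<chi> i j. c * M$i$j)"

definition is_scalar_mat :: "complex^'m^'m \<Rightarrow> bool" where
  "is_scalar_mat A \<longleftrightarrow> (\<exists>c. A = smat c (mat 1))"

definition proj_equiv :: "complex^'m^'k \<Rightarrow> complex^'m^'k \<Rightarrow> bool" where
  "proj_equiv A B \<longleftrightarrow> (\<exists>c. c \<noteq> 0 \<and> A = smat c B)"

definition pgl_subgroup :: "(complex^'m^'m) set \<Rightarrow> bool" where
  "pgl_subgroup G \<longleftrightarrow> mat 1 \<in> G \<and> (\<forall>A\<in>G. invertible A)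
     \<and> (\<forall>A\<in>G. \<forall>B\<in>G. A ** B \<in> G) \<and> (\<forall>A\<in>G. matrix_inv A \<in> G)
     \<and> (\<forall>A\<in>G. \<forall>c. c \<noteq> 0 \<longrightarrow> smat c A \<in> G)"

text \<open>Discreteness in PGL = discreteness of the preimage in SL (a finite cover).\<close>
definition pgl_discrete :: "(complex^'m^'m) set \<Rightarrow> bool" where
  "pgl_discrete G \<longleftrightarrow> (\<forall>A \<in> G \<inter> {B. det B = 1}. \<not> A islimpt (G \<inter> {B. det B = 1}))"

definition maxentry :: "complex^'m^'k \<Rightarrow> real" where
  "maxentry M = Max (range (\<lambda>(i,j). norm (M$i$j)))"

definition conv_normalized :: "(nat \<Rightarrow> complex^'m^'k) \<Rightarrow> complex^'m^'k \<Rightarrow> bool" where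
  "conv_normalized M T \<longleftrightarrow> (\<exists>c::nat \<Rightarrow> complex.
      (\<forall>v. c v \<noteq> 0 \<and> maxentry (smat (c v) (M v)) = 1)
      \<and> (\<lambda>v. smat (c v) (M v)) \<longlonglongrightarrow> T)"

definition limit_image :: "complex^'m^'k \<Rightarrow> (complex^'k) set" where
  "limit_image T = {y. y \<noteq> 0 \<and> y \<in> range (\<lambda>x. T *v x)}"

text \<open>A fixed enumeration of an (n+1)-subset of the index set, used to order rows/columns
  of minors (any fixed choice gives consistent Plucker coordinates and compound matrices).\<close>
definition enm :: "('n::finite + 'n) set \<Rightarrow> 'n \<Rightarrow> 'n + 'n" where
  "enm I = (SOME f. bij_betw f (UNIV::'n set) I)"

text \<open>Plucker coordinates of the n-plane spanned by the columns of W, indexed by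
  (n+1)-subsets of the coordinate index set (other coordinates are 0).\<close>
definition plk :: "complex^'n^('n::finite + 'n) \<Rightarrow> complex^(('n + 'n) set)" where
  "plk W = (\<chi> I. if card I = CARD('n) then det (\<chi> a b. W $ (enm I a) $ b) else 0)"

text \<open>Induced action on Lambda^{n+1} C^{2n+2}: the (n+1)-st compound matrix.\<close>
definition cmpd :: "complex^('n::finite + 'n)^('n + 'n) \<Rightarrow> complex^(('n + 'n) set)^(('n + 'n) set)" where
  "cmpd M = (\<chi> I J. if card I = CARD('n) \<and> card J = CARD('n)
                    then det (\<chi> a b. M $ (enm I a) $ (enm J b)) else 0)"

text \<open>n-planes, given by a frame of n+1 linearly independent columns.\<close>
definition nplane_frame :: "complex^'n^('n::finite + 'n) \<Rightarrow> bool" where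
  "nplane_frame W \<longleftrightarrow> inj (\<lambda>x. W *v x)"

definition nplane_pts :: "complex^'n^('n::finite + 'n) \<Rightarrow> (complex^('n + 'n)) set" where
  "nplane_pts W = {W *v x | x. x \<noteq> 0}"

definition normal_seq :: "(complex^('n::finite + 'n)^('n + 'n)) set \<Rightarrow> (nat \<Rightarrow> complex^('n + 'n)^('n + 'n)) \<Rightarrow> bool" where
  "normal_seq G s \<longleftrightarrow> (\<forall>v. s v \<in> G) \<and> (\<forall>v w. v \<noteq> w \<longrightarrow> \<not> proj_equiv (s v) (s w))
     \<and> (\<exists>T. conv_normalized s T) \<and> (\<exists>T. conv_normalized (\<lambda>v. cmpd (s v)) T)"

definition limit_nplane :: "(complex^('n::finite + 'n)^('n + 'n)) set \<Rightarrow> complex^'n^('n + 'n) \<Rightarrow> bool" where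
  "limit_nplane G W \<longleftrightarrow> nplane_frame W \<and>
     (\<exists>s T. normal_seq G s \<and> conv_normalized (\<lambda>v. cmpd (s v)) T \<and> plk W \<in> limit_image T)"

definition Omega :: "(complex^('n::finite + 'n)^('n + 'n)) set \<Rightarrow> (complex^('n + 'n)) set" where
  "Omega G = {z. z \<noteq> 0 \<and> \<not> (\<exists>W. limit_nplane G W \<and> z \<in> nplane_pts W)}"

definition proj_domain :: "(complex^'m) set \<Rightarrow> bool" where
  "proj_domain U \<longleftrightarrow> open U \<and> connected U \<and> U \<noteq> {} \<and> 0 \<notin> U
     \<and> (\<forall>c z. c \<noteq> 0 \<longrightarrow> z \<in> U \<longrightarrow> c *s z \<in> U)"

definition type_L :: "(complex^('n::finite + 'n)^('n + 'n)) set \<Rightarrow> bool" where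
  "type_L G \<longleftrightarrow> pgl_subgroup G \<and> pgl_discrete G \<and>
     (\<exists>U. proj_domain U \<and> U \<subseteq> Omega G \<and> (\<exists>W. nplane_frame W \<and> nplane_pts W \<subseteq> U))"

definition zp :: "complex^('n::finite + 'n) \<Rightarrow> complex^'n" where
  "zp z = (\<chi> i. z $ Inl i)"

definition zpp :: "complex^('n::finite + 'n) \<Rightarrow> complex^'n" where
  "zpp z = (\<chi> i. z $ Inr i)"

definition Cblk :: "complex^('n::finite + 'n)^('n + 'n) \<Rightarrow> complex^'n^'n" where
  "Cblk g = (\<chi> i j. g $ Inr i $ Inl j)"

definition Dblk :: "complex^('n::finite + 'n)^('n + 'n) \<Rightarrow> complex^'n^'n" where
  "Dblk g = (\<chi> i j. g $ Inr i $ Inr j)"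

definition VR :: "real \<Rightarrow> (complex^('n::finite + 'n)) set" where
  "VR R = {z. norm (zp z) > R * norm (zpp z)}"

text \<open>Elements of Gamma minus 1, via their SL representatives.\<close>
definition Gstar :: "(complex^('n::finite + 'n)^('n + 'n)) set \<Rightarrow> (complex^('n + 'n)^('n + 'n)) set" where
  "Gstar G = {g \<in> G. det g = 1 \<and> \<not> is_scalar_mat g}"

definition Deltabar :: "(complex^('n::finite + 'n)^('n + 'n)) set \<Rightarrow> (complex^('n + 'n)) set" where
  "Deltabar G = {z. z \<noteq> 0 \<and>
     (\<forall>g\<in>Gstar G. norm (zpp z) \<le> norm (Cblk g *v zp z + Dblk g *v zpp z))}"

definition Fregion :: "(complex^('n::finite + 'n)^('n + 'n)) set \<Rightarrow> (complex^('n + 'n)) set" where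
  "Fregion G = interior (Deltabar G)"

end

theory Submission
  imports Defs
begin

definition jn :: "complex^'n \<Rightarrow> complex^'n \<Rightarrow> complex^('n::finite + 'n)" where
  "jn a b = (\<chi> k. case k of Inl i \<Rightarrow> a $ i | Inr i \<Rightarrow> b $ i)"

lemma zp_jn[simp]: "zp (jn a b) = a" by (simp add: zp_def jn_def vec_eq_iff)
lemma zpp_jn[simp]: "zpp (jn a b) = b" by (simp add: zpp_def jn_def vec_eq_iff)
lemma jn_zp: "jn (zp z) (zpp z) = z"
  by (simp add: zp_def zpp_def jn_def vec_eq_iff split: sum.split)

lemma jn00: "jn 0 0 = 0"
  by (simp add: jn_def vec_eq_iff split: sum.split)

lemma zero_parts: "z = 0 \<longleftrightarrow> zp z = 0 \<and> zpp z = 0"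
  by (metis jn_zp jn00 zp_jn zpp_jn)

lemma zpp_mult: "zpp (g *v z) = Cblk g *v zp z + Dblk g *v zpp z"
proof -
  have "(g *v z) $ Inr i = (Cblk g *v zp z + Dblk g *v zpp z) $ i" for i
  proof -
    have "(g *v z) $ Inr i = (\<Sum>k\<in>UNIV <+> UNIV. g $ Inr i $ k * z $ k)"
      by (simp only: matrix_vector_mult_def UNIV_Plus_UNIV vec_lambda_beta)
    also have "\<dots> = (Cblk g *v zp z + Dblk g *v zpp z) $ i"
      by (simp only: sum.Plus[OF finite finite])
         (simp add: matrix_vector_mult_def Cblk_def Dblk_def zp_def zpp_def o_def)
    finally show ?thesis .
  qed
  then show ?thesis by (simp add: zpp_def vec_eq_iff)
qed

lemma lin_zp: "linear zp"
  by (simp add: linear_iff zp_def vec_eq_iff)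
lemma lin_zpp: "linear zpp"
  by (simp add: linear_iff zpp_def vec_eq_iff)

lemma open_VR: "open (VR r :: (complex^('n::finite + 'n)) set)"
proof -
  have c1: "continuous_on UNIV (zp :: complex^('n + 'n) \<Rightarrow> _)"
    by (rule linear_continuous_on[OF linear_conv_bounded_linear[THEN iffD1, OF lin_zp]])
  have c2: "continuous_on UNIV (zpp :: complex^('n + 'n) \<Rightarrow> _)"
    by (rule linear_continuous_on[OF linear_conv_bounded_linear[THEN iffD1, OF lin_zpp]])
  show ?thesis unfolding VR_def
    by (intro open_Collect_less continuous_intros c1 c2)
qed

lemma bl_mat: "bounded_linear (\<lambda>x. (M::complex^'n^'m) *v x)"
  using linear_conv_bounded_linear matrix_vector_mul_linear by blast

lemma inv_mv:
  fixes C :: "complex^'n^'n"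
  assumes "invertible C"
  shows "C *v (matrix_inv C *v y) = y" "matrix_inv C *v (C *v y) = y"
proof -
  have "C ** matrix_inv C = mat 1 \<and> matrix_inv C ** C = mat 1"
    using assms unfolding invertible_def matrix_inv_def by (rule someI_ex)
  then show "C *v (matrix_inv C *v y) = y" "matrix_inv C *v (C *v y) = y"
    by (simp_all add: matrix_vector_mul_assoc)
qed

lemma mv_neg: "(M::complex^'n^'m) *v (- x) = - (M *v x)"
  using linear_neg[OF matrix_vector_mul_linear[of M]] by simp

lemma key:
  fixes g :: "complex^('n::finite + 'n)^('n + 'n)"
  assumes inv: "invertible g" and gG: "g \<in> G" and ns: "\<not> is_scalar_mat g"
    and h4: "\<forall>g\<in>G. \<not> is_scalar_mat g \<longrightarrow> (\<lambda>z. g *v z) ` VR R \<inter> VR R = {}"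
    and z0: "z \<noteq> 0" and zz: "zpp (g *v z) = 0"
  shows "norm (zp z) \<le> R * norm (zpp z)"
proof (rule ccontr)
  assume "\<not> ?thesis"
  then have zin: "z \<in> VR R" by (simp add: VR_def)
  have "g *v z \<noteq> 0"
    using inj_matrix_vector_mult[OF inv] z0 unfolding inj_on_def
    by (metis matrix_vector_mult_0_right UNIV_I)
  then have "zp (g *v z) \<noteq> 0" using zz zero_parts by blast
  then have "g *v z \<in> VR R" using zz by (simp add: VR_def)
  with zin have "g *v z \<in> (\<lambda>z. g *v z) ` VR R \<inter> VR R" by blast
  with h4 gG ns show False by blast
qed

lemma Cinv:
  fixes g :: "complex^('n::finite + 'n)^('n + 'n)"
  assumes inv: "invertible g" and gG: "g \<in> G" and ns: "\<not> is_scalar_mat g"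
    and h4: "\<forall>g\<in>G. \<not> is_scalar_mat g \<longrightarrow> (\<lambda>z. g *v z) ` VR R \<inter> VR R = {}"
  shows "invertible (Cblk g)"
proof -
  have "\<forall>x. Cblk g *v x = 0 \<longrightarrow> x = 0"
  proof (intro allI impI)
    fix x assume cx: "Cblk g *v x = 0"
    show "x = 0"
    proof (rule ccontr)
      assume x0: "x \<noteq> 0"
      have "jn x 0 \<noteq> 0" using x0 zero_parts[of "jn x 0"] by simp
      moreover have "zpp (g *v jn x 0) = 0" by (simp add: zpp_mult cx)
      ultimately have "norm x \<le> R * norm (0::complex^'n)"
        using key[OF inv gG ns h4] by fastforce
      with x0 show False by simp
    qed
  qed
  then show ?thesis
    using invertible_left_inverse matrix_left_invertible_ker by blast
qed

theorem proposition7p6: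
  fixes G :: "(complex^('n::finite + 'n)^('n + 'n)) set" and R :: real
  assumes "type_L G"
    and "R > 0"
    and "VR R \<subseteq> Omega G"
    and "\<forall>g\<in>G. \<not> is_scalar_mat g \<longrightarrow> (\<lambda>z. g *v z) ` VR R \<inter> VR R = {}"
  shows "bounded {onorm (\<lambda>x. matrix_inv (Cblk g) *v x) | g. g \<in> Gstar G}
         \<longleftrightarrow> (\<exists>R'>0. VR R' \<subseteq> closure (Fregion G))"
proof -
  note h4 = assms(4)
  have ginv: "\<And>g. g \<in> Gstar G \<Longrightarrow> invertible g \<and> g \<in> G \<and> \<not> is_scalar_mat g"
    using assms(1) unfolding type_L_def pgl_subgroup_def Gstar_def by blast
  have Ci: "\<And>g. g \<in> Gstar G \<Longrightarrow> invertible (Cblk g)"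
    using ginv Cinv[OF _ _ _ h4] by blast
  show ?thesis
  proof
    assume "bounded {onorm (\<lambda>x. matrix_inv (Cblk g) *v x) | g. g \<in> Gstar G}"
    then obtain M0 where M0: "\<And>g. g \<in> Gstar G \<Longrightarrow> norm (onorm (\<lambda>x. matrix_inv (Cblk g) *v x)) \<le> M0"
      unfolding bounded_iff by blast
    define M where "M = max M0 1"
    have Mpos: "M > 0" by (simp add: M_def)
    have Mb: "norm (matrix_inv (Cblk g) *v y) \<le> M * norm y" if "g \<in> Gstar G" for g y
    proof -
      have "norm (matrix_inv (Cblk g) *v y) \<le> onorm (\<lambda>x. matrix_inv (Cblk g) *v x) * norm y"
        by (rule onorm[OF bl_mat])
      also have "\<dots> \<le> M * norm y"
        using M0[OF that] by (intro mult_right_mono) (auto simp: M_def)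
      finally show ?thesis .
    qed
    have "VR (R + M) \<subseteq> Deltabar G"
    proof
      fix z :: "complex^('n + 'n)" assume zV: "z \<in> VR (R + M)"
      then have nz: "norm (zp z) > (R + M) * norm (zpp z)" by (simp add: VR_def)
      have z0: "z \<noteq> 0" using zV by (auto simp: VR_def zero_parts)
      have "norm (zpp z) \<le> norm (Cblk g *v zp z + Dblk g *v zpp z)" if gS: "g \<in> Gstar G" for g
      proof (cases "zpp z = 0")
        case True then show ?thesis by simp
      next
        case False
        define C where "C = Cblk g"
        define y where "y = Cblk g *v zp z + Dblk g *v zpp z"
        define u where "u = zp z - matrix_inv C *v y"
        have "C *v u = C *v zp z - y"
          using inv_mv(1)[OF Ci[OF gS]] by (simp add: u_def C_def matrix_vector_mult_diff_distrib)
        then have "zpp (g *v jn u (zpp z)) = 0"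
          by (simp add: zpp_mult C_def y_def)
        moreover have "jn u (zpp z) \<noteq> 0" using False zero_parts[of "jn u (zpp z)"] by simp
        ultimately have nu: "norm u \<le> R * norm (zpp z)"
          using key[OF _ _ _ h4, of g] ginv[OF gS] by fastforce
        have "norm (zp z) \<le> norm u + norm (matrix_inv C *v y)"
          by (metis u_def diff_add_cancel norm_triangle_ineq)
        also have "\<dots> \<le> R * norm (zpp z) + M * norm y"
          using nu Mb[OF gS, of y] by (simp add: C_def)
        finally have "M * norm (zpp z) < M * norm y" using nz by (simp add: algebra_simps)
        then show ?thesis using Mpos by (simp add: y_def)
      qed
      then show "z \<in> Deltabar G" using z0 by (simp add: Deltabar_def)
    qed
    then have "VR (R + M) \<subseteq> closure (Fregion G)"
      unfolding Fregion_def using interior_maximal[OF _ open_VR] closure_subset by blast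
    then show "\<exists>R'>0. VR R' \<subseteq> closure (Fregion G)"
      using assms(2) Mpos by (intro exI[of _ "R + M"]) auto
  next
    assume "\<exists>R'>0. VR R' \<subseteq> closure (Fregion G)"
    then obtain R' where R'p: "R' > 0" and sub: "VR R' \<subseteq> closure (Fregion G)" by blast
    have bnd: "onorm (\<lambda>x. matrix_inv (Cblk g) *v x) \<le> 2 * R'" if gS: "g \<in> Gstar G" for g
    proof -
      define C where "C = Cblk g"
      define D where "D = Dblk g"
      define S where "S = {z::complex^('n+'n). norm (zpp z) \<le> norm (C *v zp z + D *v zpp z)}"
      have cS: "closed S"
      proof -
        have c1: "continuous_on UNIV (zp :: complex^('n + 'n) \<Rightarrow> _)"
          by (rule linear_continuous_on[OF linear_conv_bounded_linear[THEN iffD1, OF lin_zp]])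
        have c2: "continuous_on UNIV (zpp :: complex^('n + 'n) \<Rightarrow> _)"
          by (rule linear_continuous_on[OF linear_conv_bounded_linear[THEN iffD1, OF lin_zpp]])
        have c3: "continuous_on UNIV (\<lambda>x. C *v x)" "continuous_on UNIV (\<lambda>x. D *v x)"
          by (auto intro: linear_continuous_on bl_mat)
        show ?thesis unfolding S_def
          by (intro closed_Collect_le continuous_intros c1 c2
              continuous_on_compose2[OF c3(1) c1] continuous_on_compose2[OF c3(2) c2]) auto
      qed
      have "Deltabar G \<subseteq> S" using gS by (auto simp: Deltabar_def S_def C_def D_def)
      then have "closure (Fregion G) \<subseteq> S"
        unfolding Fregion_def
        by (meson cS closure_minimal interior_subset order_trans)
      with sub have VS: "VR R' \<subseteq> S" by blast
      have pt: "norm (matrix_inv C *v e) \<le> 2 * R' * norm e" for e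
      proof (cases "e = 0")
        case True then show ?thesis by simp
      next
        case False
        obtain k :: 'n where True by blast
        define w where "w = axis k (1::complex)"
        have w0: "w \<noteq> 0" by (simp add: w_def)
        define v where "v = (2 * norm e / norm w) *\<^sub>R w"
        have nv: "norm v = 2 * norm e" using w0 by (simp add: v_def)
        have one: "norm (matrix_inv C *v (s - D *v v)) \<le> R' * norm v" if ns: "norm s = norm e" for s
        proof -
          define z where "z = jn (matrix_inv C *v (s - D *v v)) v"
          have "C *v zp z + D *v zpp z = s"
            using inv_mv(1)[OF Ci[OF gS]] by (simp add: z_def C_def)
          then have "z \<notin> S" using ns nv False by (simp add: S_def z_def)
          then have "z \<notin> VR R'" using VS by blast
          then show ?thesis by (simp add: VR_def z_def not_less)
        qed
        have "2 *\<^sub>R (matrix_inv C *v e) = matrix_inv C *v (e - D *v v) - matrix_inv C *v (- e - D *v v)"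
          by (simp add: matrix_vector_mult_diff_distrib mv_neg scaleR_2)
        then have "2 * norm (matrix_inv C *v e) \<le> norm (matrix_inv C *v (e - D *v v)) + norm (matrix_inv C *v (- e - D *v v))"
          by (metis norm_scaleR abs_numeral norm_triangle_ineq4)
        also have "\<dots> \<le> R' * norm v + R' * norm v"
          using one[of e] one[of "-e"] by simp
        finally show ?thesis using nv by simp
      qed
      show ?thesis unfolding C_def[symmetric]
        by (rule onorm_bound) (use R'p pt in auto)
    qed
    show "bounded {onorm (\<lambda>x. matrix_inv (Cblk g) *v x) | g. g \<in> Gstar G}"
      unfolding bounded_iff
      by (rule exI[of _ "2 * R'"]) (auto simp: bnd onorm_pos_le[OF bl_mat])
  qed
qed

end
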